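(* Assume $\mathcal{T}$ is a tree. There is a constant $m_1$ such that for all measurable locally bounded functions $w_i,x_i,y_i$ ($i\in\mathcal{I}$), $z_j$ ($j\in\mathcal{J}$), $\psi_{ij}$ (with $\psi_{ij}=0$ for $i\not\sim j$) on $[0,\infty)$ satisfying $$x_i(t)=w_i(t)-\sum_{j\in\mathcal{J}}\mu_{ij}\int_0^t\psi_{ij}(s)ds-\theta_i\int_0^ty_i(s)ds,\quad \sum_{j\in\mathcal{J}}\psi_{ij}=x_i-y_i\ \ (i\in\mathcal{I}),\quad \sum_{i\in\mathcal{I}}\psi_{ij}=-z_j\ \ (j\in\mathcal{J}),$$ we have $$\|\mathfrak{J}\psi(t)\|+\|x(t)\|\le m_1\big(\|w\|_t^*+\|\mathfrak{J}y\|_t^*+\|\mathfrak{J}z\|_t^*\big),\qquad t\ge0;$$ $m_1$ does not depend on $\psi,w,x,y,z$ or $t$.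
   Context: $\mathcal{I}=\{1,\dots,I\}$, $\mathcal{J}=\{I+1,\dots,I+J\}$, $\mathcal{E}\subset\mathcal{I}\times\mathcal{J}$, $i\sim j$ iff $(i,j)\in\mathcal{E}$; $\mathcal{T}$ is the bipartite graph with vertices $\mathcal{I}\cup\mathcal{J}$ and edges $\mathcal{E}$. Constants $\mu_{ij}>0$ for $(i,j)\in\mathcal{E}$, $\mu_{ij}=0$ otherwise, $\theta_i\ge0$. $\mathfrak{J}f(t)=\int_0^tf(s)ds$ (applied componentwise to vector/array-valued functions). $\|a\|$ denotes the sum of absolute values of the entries of a vector or array, and $\|f\|_t^*=\sup_{0\le s\le t}\|f(s)\|$. *)

theory Defs
  imports "HOL-Analysis.Analysis"
begin

definition ug_connected :: "'a set \<Rightarrow> ('a \<Rightarrow> 'a \<Rightarrow> bool) \<Rightarrow> bool" where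
  "ug_connected V adj \<longleftrightarrow>
     (\<forall>u\<in>V. \<forall>v\<in>V. (\<lambda>a b. a \<in> V \<and> b \<in> V \<and> adj a b)\<^sup>*\<^sup>* u v)"

definition ug_has_cycle :: "'a set \<Rightarrow> ('a \<Rightarrow> 'a \<Rightarrow> bool) \<Rightarrow> bool" where
  "ug_has_cycle V adj \<longleftrightarrow>
     (\<exists>vs. length vs \<ge> 3 \<and> distinct vs \<and> set vs \<subseteq> V \<and>
        (\<forall>k < length vs. adj (vs ! k) (vs ! ((k + 1) mod length vs))))"

definition ug_tree :: "'a set \<Rightarrow> ('a \<Rightarrow> 'a \<Rightarrow> bool) \<Rightarrow> bool" where
  "ug_tree V adj \<longleftrightarrow> V \<noteq> {} \<and> ug_connected V adj \<and> \<not> ug_has_cycle V adj"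

definition bip_adj :: "(nat \<times> nat) set \<Rightarrow> nat \<Rightarrow> nat \<Rightarrow> bool" where
  "bip_adj E a b \<longleftrightarrow> (a, b) \<in> E \<or> (b, a) \<in> E"

definition meas_locbdd :: "(real \<Rightarrow> real) \<Rightarrow> bool" where
  "meas_locbdd f \<longleftrightarrow> f \<in> borel_measurable (restrict_space lborel {0..}) \<and>
     (\<forall>t\<ge>0. \<exists>B. \<forall>s\<in>{0..t}. \<bar>f s\<bar> \<le> B)"

definition Jint :: "(real \<Rightarrow> real) \<Rightarrow> real \<Rightarrow> real" where
  "Jint f t = (LINT s:{0..t}|lborel. f s)"

end

theory Submission
  imports Defs
begin


lemma ml_setint:
  assumes "meas_locbdd f" "t \<ge> 0"
  shows "set_integrable lborel {0..t} f"
proof -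
  from assms obtain B where B: "\<forall>s\<in>{0..t}. \<bar>f s\<bar> \<le> B" unfolding meas_locbdd_def by blast
  have m: "(\<lambda>x. if x \<in> {0..} then f x else 0) \<in> borel_measurable lborel"
    using assms(1) unfolding meas_locbdd_def
    by (subst (asm) measurable_restrict_space_iff[where c=0]) auto
  have "integrable lborel (\<lambda>x. indicator {0..t} x *\<^sub>R (if x \<in> {0..} then f x else 0))"
    by (rule integrableI_bounded_set_indicator[where B=B]) (use m B assms in auto)
  moreover have "(\<lambda>x. indicator {0..t} x *\<^sub>R (if x \<in> {0..} then f x else 0)) = (\<lambda>x. indicator {0..t} x *\<^sub>R f x)"
    by (auto simp: indicator_def fun_eq_iff)
  ultimately show ?thesis unfolding set_integrable_def by simp
qed

lemma ml_int:
  assumes "meas_locbdd f" "t \<ge> 0"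
  shows "f integrable_on {0..t}" "Jint f t = integral {0..t} f"
  using set_borel_integral_eq_integral[OF ml_setint[OF assms]] unfolding Jint_def by auto

lemma ml_cont:
  assumes "meas_locbdd f" "t \<ge> 0"
  shows "continuous_on {0..t} (Jint f)"
proof -
  have "continuous_on {0..t} (\<lambda>s. integral {0..s} f)"
    by (rule indefinite_integral_continuous_1) (rule ml_int[OF assms])
  then show ?thesis
    by (rule continuous_on_eq) (use ml_int(2)[OF assms(1)] in auto)
qed

lemma ml_bound:
  assumes "meas_locbdd f" "s \<ge> 0" "\<forall>r\<in>{0..s}. \<bar>f r\<bar> \<le> B"
  shows "\<bar>Jint f s\<bar> \<le> B * s"
proof -
  have B0: "0 \<le> B" using assms(2,3) by (meson abs_ge_zero atLeastAtMost_iff order_trans order_refl)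
  have "norm (integral (cbox 0 s) f) \<le> B * Henstock_Kurzweil_Integration.content (cbox 0 s)"
    by (rule has_integral_bound[OF B0 integrable_integral]) (use assms ml_int in \<open>auto simp: cbox_interval\<close>)
  then show ?thesis using assms ml_int by auto
qed

lemma ml_bdd: "meas_locbdd f \<Longrightarrow> t \<ge> 0 \<Longrightarrow> \<exists>B. \<forall>s\<in>{0..t}. \<bar>Jint f s\<bar> \<le> B"
proof -
  assume a: "meas_locbdd f" "t \<ge> 0"
  then obtain B where B: "\<forall>s\<in>{0..t}. \<bar>f s\<bar> \<le> B" unfolding meas_locbdd_def by blast
  have "\<bar>Jint f s\<bar> \<le> \<bar>B\<bar> * t" if "s \<in> {0..t}" for s
  proof -
    have "\<bar>Jint f s\<bar> \<le> \<bar>B\<bar> * s" by (rule ml_bound) (use a B that in force)+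
    also have "\<dots> \<le> \<bar>B\<bar> * t" using that by (auto intro: mult_left_mono)
    finally show ?thesis .
  qed
  then show ?thesis by blast
qed

lemma ml_sum:
  assumes "finite K" "\<forall>k\<in>K. meas_locbdd (g k)" "meas_locbdd f" "s \<ge> 0"
    "\<forall>r\<in>{0..s}. f r = (\<Sum>k\<in>K. g k r)"
  shows "Jint f s = (\<Sum>k\<in>K. Jint (g k) s)"
proof -
  have "Jint f s = integral {0..s} (\<lambda>r. \<Sum>k\<in>K. g k r)"
    using ml_int(2)[OF assms(3,4)] assms(5) by (auto intro: integral_cong)
  also have "\<dots> = (\<Sum>k\<in>K. integral {0..s} (g k))"
    by (rule integral_sum) (use assms ml_int in auto)
  also have "\<dots> = (\<Sum>k\<in>K. Jint (g k) s)" using assms ml_int by auto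
  finally show ?thesis .
qed

lemma ml_diff:
  assumes "meas_locbdd f" "meas_locbdd g" "meas_locbdd h" "s \<ge> 0"
    "\<forall>r\<in>{0..s}. f r = g r - h r"
  shows "Jint f s = Jint g s - Jint h s"
proof -
  have "Jint f s = integral {0..s} (\<lambda>r. g r - h r)"
    using ml_int(2)[OF assms(1,4)] assms(5) by (auto intro: integral_cong)
  also have "\<dots> = integral {0..s} g - integral {0..s} h"
    by (rule integral_diff) (use assms ml_int in auto)
  finally show ?thesis using assms ml_int by auto
qed

lemma ml_zero:
  assumes "\<forall>r\<ge>0. f r = 0" "s \<ge> 0"
  shows "Jint f s = 0"
proof -
  have "Jint f s = (LINT r:{0..s}|lborel. 0)" unfolding Jint_def
    by (rule set_lebesgue_integral_cong) (use assms in auto)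
  then show ?thesis by simp
qed



lemma cmp_pos:
  assumes f: "meas_locbdd f" and mu: "\<mu> > 0" and t: "t \<ge> 0"
    and eq: "\<forall>r\<in>{0..t}. f r = g r - \<mu> * Jint f r"
    and gK: "\<forall>r\<in>{0..t}. g r \<le> K" and K: "K \<ge> 0" and s: "s \<in> {0..t}"
  shows "Jint f s \<le> K / \<mu>"
proof (rule ccontr)
  assume c: "\<not> Jint f s \<le> K / \<mu>"
  have s0': "0 \<le> s" "s \<le> t" using s by auto
  define A where "A = {0..s} \<inter> Jint f -` {..K/\<mu>}"
  have cont: "continuous_on {0..s} (Jint f)"
    using ml_cont[OF f s0'(1)] .
  have clA: "closed A" unfolding A_def
    by (rule continuous_closed_preimage[OF cont]) auto
  have J0: "Jint f 0 = 0" using ml_int(2)[OF f order_refl] by simp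
  have "0 \<in> A" unfolding A_def using J0 K mu s0' by auto
  hence neA: "A \<noteq> {}" by blast
  have bdA: "bdd_above A" unfolding A_def by (rule bdd_aboveI[where M=s]) auto
  define s0 where "s0 = Sup A"
  have s0A: "s0 \<in> A" unfolding s0_def by (rule closed_contains_Sup[OF neA bdA clA])
  hence s0: "0 \<le> s0" "s0 \<le> s" "Jint f s0 \<le> K/\<mu>" unfolding A_def by auto
  have neg: "f r \<le> 0" if r: "r \<in> {s0<..s}" for r
  proof -
    have "r \<notin> A"
    proof
      assume "r \<in> A"
      then have "r \<le> s0" unfolding s0_def by (rule cSup_upper[OF _ bdA])
      with r show False by auto
    qed
    then have "Jint f r > K/\<mu>" using r s0 unfolding A_def by auto
    then have "\<mu> * Jint f r > K" using mu by (simp add: field_simps)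
    moreover have "g r \<le> K" using gK r s0 s0' by auto
    moreover have "f r = g r - \<mu> * Jint f r" using eq r s0 s0' by auto
    ultimately show ?thesis by linarith
  qed
  have fi: "f integrable_on {0..s}" using ml_int(1)[OF f s0'(1)] .
  have fi2: "f integrable_on {s0..s}"
    by (rule integrable_subinterval_real[OF fi]) (use s0 in auto)
  have comb: "integral {0..s0} f + integral {s0..s} f = integral {0..s} f"
    by (rule Henstock_Kurzweil_Integration.integral_combine[OF s0(1,2) fi])
  have "integral {s0..s} f = integral {s0..s} (\<lambda>r. if r = s0 then 0 else f r)"
    by (rule integral_spike[of "{s0}"]) auto
  also have "\<dots> \<le> integral {s0..s} (\<lambda>r. 0::real)"
  proof (rule integral_le)
    show "(\<lambda>r. if r = s0 then 0 else f r) integrable_on {s0..s}"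
      by (rule integrable_spike[OF fi2, of "{s0}"]) auto
  qed (use neg in auto)
  finally have "integral {s0..s} f \<le> 0" by simp
  then have "Jint f s \<le> Jint f s0"
    using comb ml_int(2)[OF f s0'(1)] ml_int(2)[OF f s0(1)] by linarith
  with s0 c show False by linarith
qed

lemma cmp_abs:
  assumes f: "meas_locbdd f" and mu: "\<mu> > 0" and t: "t \<ge> 0"
    and eq: "\<forall>r\<in>{0..t}. f r = g r - \<mu> * Jint f r"
    and gK: "\<forall>r\<in>{0..t}. \<bar>g r\<bar> \<le> K" and s: "s \<in> {0..t}"
  shows "\<bar>Jint f s\<bar> \<le> K / \<mu>"
proof -
  have K: "K \<ge> 0" using gK t by (meson abs_ge_zero atLeastAtMost_iff order_trans order_refl)
  have 1: "Jint f s \<le> K / \<mu>"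
    by (rule cmp_pos[OF f mu t eq _ K s]) (use gK in \<open>auto simp: abs_le_iff\<close>)
  have fm: "meas_locbdd (\<lambda>r. - f r)" using f unfolding meas_locbdd_def
    by (auto simp: borel_measurable_uminus)
  have Jm: "Jint (\<lambda>r. - f r) r = - Jint f r" for r unfolding Jint_def by (simp add: set_lebesgue_integral_def)
  have 2: "Jint (\<lambda>r. - f r) s \<le> K / \<mu>"
    by (rule cmp_pos[OF fm mu t _ _ K s, where g="\<lambda>r. - g r"]) (use eq gK in \<open>auto simp: Jm abs_le_iff\<close>)
  show ?thesis using 1 2 Jm by (auto simp: abs_le_iff)
qed



lemma walk_cycle:
  fixes v :: "nat \<Rightarrow> 'a"
  assumes adj: "\<forall>k<m. adj (v k) (v (Suc k))"
    and nb: "\<forall>k. k + 2 \<le> m \<longrightarrow> v (k + 2) \<noteq> v k"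
    and cl: "v m = v 0" and m: "0 < m" and irr: "\<forall>x. \<not> adj x x"
  shows "\<exists>vs. length vs \<ge> 3 \<and> distinct vs \<and> set vs \<subseteq> v ` {..m} \<and>
           (\<forall>k < length vs. adj (vs ! k) (vs ! ((k + 1) mod length vs)))"
proof -
  define P where "P = (\<lambda>k. \<exists>a<k. v a = v k)"
  have Pm: "P m" unfolding P_def using cl m by auto
  define k0 where "k0 = (LEAST k. P k)"
  have Pk0: "P k0" unfolding k0_def by (rule LeastI[of P, OF Pm])
  have k0m: "k0 \<le> m" unfolding k0_def by (rule Least_le[of P, OF Pm])
  have minP: "\<not> P k" if "k < k0" for k using that not_less_Least unfolding k0_def by blast
  obtain a where a: "a < k0" "v a = v k0" using Pk0 unfolding P_def by blast
  define vs where "vs = map v [a..<k0]"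
  have len: "length vs = k0 - a" unfolding vs_def by simp
  have dist: "distinct vs" unfolding vs_def
  proof (subst distinct_map, intro conjI)
    show "inj_on v (set [a..<k0])"
    proof (rule inj_onI)
      fix p q assume p: "p \<in> set [a..<k0]" and q: "q \<in> set [a..<k0]" and e: "v p = v q"
      show "p = q"
      proof (rule ccontr)
        assume "p \<noteq> q"
        then consider "p < q" | "q < p" by linarith
        then show False
        proof cases
          case 1 then have "P q" unfolding P_def using e by blast
          with minP q show False by auto
        next
          case 2 then have "P p" unfolding P_def using e by metis
          with minP p show False by auto
        qed
      qed
    qed
  qed simp
  have ne1: "k0 - a \<noteq> 1"
  proof
    assume "k0 - a = 1" then have "Suc a = k0" using a by simp
    with adj a k0m irr show False by (metis order_less_le_trans)
  qed
  have ne2: "k0 - a \<noteq> 2"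
  proof
    assume "k0 - a = 2" then have "a + 2 = k0" using a by simp
    with nb a k0m show False by metis
  qed
  have len3: "length vs \<ge> 3" using len ne1 ne2 a by linarith
  have sub: "set vs \<subseteq> v ` {..m}" unfolding vs_def using k0m by auto
  have cyc: "adj (vs ! k) (vs ! ((k + 1) mod length vs))" if k: "k < length vs" for k
  proof (cases "k + 1 < length vs")
    case True
    then have "vs ! k = v (a + k)" "vs ! ((k + 1) mod length vs) = v (Suc (a + k))"
      unfolding vs_def using k by auto
    moreover have "a + k < m" using True len k0m by linarith
    ultimately show ?thesis using adj by simp
  next
    case False
    then have kk: "k + 1 = length vs" using k by simp
    then have "vs ! ((k + 1) mod length vs) = v a" unfolding vs_def using a by simp
    moreover have "vs ! k = v (a + k)" unfolding vs_def using k len by simp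
    moreover have "Suc (a + k) = k0" using kk len a by simp
    moreover have "a + k < m" using kk len k0m a by linarith
    ultimately show ?thesis using adj a by metis
  qed
  show ?thesis using len3 dist sub cyc by blast
qed



definition depR :: "(nat \<times> nat) set \<Rightarrow> ((nat \<times> nat) \<times> (nat \<times> nat)) set" where
  "depR E = {(e2, e). e \<in> E \<and> e2 \<in> E \<and> (fst e, snd e2) \<in> E \<and> snd e2 \<noteq> snd e \<and> fst e2 \<noteq> fst e}"

lemma dep_wf:
  assumes E_sub: "E \<subseteq> I \<times> J" and fin: "finite I" "finite J" and disj: "I \<inter> J = {}"
    and nocyc: "\<not> ug_has_cycle (I \<union> J) (bip_adj E)"
  shows "wf (depR E)"
proof (rule finite_acyclic_wf)
  have "depR E \<subseteq> E \<times> E" unfolding depR_def by auto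
  moreover have "finite E" using E_sub fin finite_subset by blast
  ultimately show "finite (depR E)" using finite_subset by blast
  show "acyclic (depR E)"
    unfolding acyclic_def
  proof (intro allI notI)
    fix e assume "(e, e) \<in> (depR E)\<^sup>+"
    then obtain n where n: "n > 0" "(e, e) \<in> (depR E) ^^ n" using trancl_power by blast
    then obtain f where f: "f 0 = e" "f n = e" "\<forall>i<n. (f i, f (Suc i)) \<in> depR E"
      using relpow_fun_conv by metis
    define p where "p = (\<lambda>k. f (n - k))"
    have pE: "p q \<in> E" if "q \<le> n" for q
    proof (cases "q = 0")
      case True then show ?thesis using f n unfolding p_def depR_def
        by (metis (no_types, lifting) case_prodD mem_Collect_eq diff_zero)
    next
      case False then have "n - q < n" using that n by auto
      then show ?thesis using f unfolding p_def depR_def by auto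
    qed
    have pR: "(p (Suc q), p q) \<in> depR E" if "q < n" for q
    proof -
      have "n - Suc q < n" "Suc (n - Suc q) = n - q" using that by auto
      then show ?thesis using f unfolding p_def by metis
    qed
    define v where "v = (\<lambda>k. if even k then snd (p (k div 2)) else fst (p (k div 2)))"
    have irr: "\<forall>x. \<not> bip_adj E x x" using E_sub disj unfolding bip_adj_def by auto
    have adj: "\<forall>k<2*n. bip_adj E (v k) (v (Suc k))"
    proof (intro allI impI)
      fix k assume k: "k < 2 * n"
      show "bip_adj E (v k) (v (Suc k))"
      proof (cases "even k")
        case True
        then obtain q where q: "k = 2 * q" by blast
        then have "v k = snd (p q)" "v (Suc k) = fst (p q)" unfolding v_def by auto
        moreover have "p q \<in> E" using pE q k by auto
        ultimately show ?thesis unfolding bip_adj_def by (metis prod.collapse)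
      next
        case False
        then obtain q where q: "k = 2 * q + 1" using oddE by blast
        then have "v k = fst (p q)" "v (Suc k) = snd (p (Suc q))" unfolding v_def by auto
        moreover have "(p (Suc q), p q) \<in> depR E" using pR q k by auto
        ultimately show ?thesis unfolding bip_adj_def depR_def by auto
      qed
    qed
    have nb: "\<forall>k. k + 2 \<le> 2 * n \<longrightarrow> v (k + 2) \<noteq> v k"
    proof (intro allI impI)
      fix k assume k: "k + 2 \<le> 2 * n"
      show "v (k + 2) \<noteq> v k"
      proof (cases "even k")
        case True
        then obtain q where q: "k = 2 * q" by blast
        then have "v k = snd (p q)" "v (k + 2) = snd (p (Suc q))" unfolding v_def by auto
        moreover have "(p (Suc q), p q) \<in> depR E" using pR q k by auto
        ultimately show ?thesis unfolding depR_def by auto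
      next
        case False
        then obtain q where q: "k = 2 * q + 1" using oddE by blast
        then have "v k = fst (p q)" "v (k + 2) = fst (p (Suc q))" unfolding v_def by auto
        moreover have "(p (Suc q), p q) \<in> depR E" using pR q k by auto
        ultimately show ?thesis unfolding depR_def by auto
      qed
    qed
    have cl: "v (2 * n) = v 0" unfolding v_def p_def using f by simp
    have vV: "v ` {..2*n} \<subseteq> I \<union> J"
    proof
      fix x assume "x \<in> v ` {..2*n}"
      then obtain k where k: "k \<le> 2 * n" "x = v k" by auto
      have "k div 2 \<le> n" using k by auto
      then have "p (k div 2) \<in> E" by (rule pE)
      then show "x \<in> I \<union> J" using k E_sub unfolding v_def by (auto split: if_splits)
    qed
    obtain vs where "length vs \<ge> 3" "distinct vs" "set vs \<subseteq> v ` {..2*n}"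
      "\<forall>k < length vs. bip_adj E (vs ! k) (vs ! ((k + 1) mod length vs))"
      using walk_cycle[OF adj nb cl _ irr] n by auto
    then have "ug_has_cycle (I \<union> J) (bip_adj E)" unfolding ug_has_cycle_def using vV by blast
    with nocyc show False by blast
  qed
qed



definition bn :: "'w set \<Rightarrow> ('w \<Rightarrow> real) \<Rightarrow> ('w \<Rightarrow> real) \<Rightarrow> ('w \<Rightarrow> real \<Rightarrow> real) \<Rightarrow> bool" where
  "bn \<Omega> T N F \<longleftrightarrow> (\<exists>K. \<forall>\<omega>\<in>\<Omega>. \<forall>s\<in>{0..T \<omega>}. \<bar>F \<omega> s\<bar> \<le> K * N \<omega>)"

lemma bn_mono:
  assumes "bn \<Omega> T N G" "\<And>\<omega> s. \<omega> \<in> \<Omega> \<Longrightarrow> s \<in> {0..T \<omega>} \<Longrightarrow> \<bar>F \<omega> s\<bar> \<le> \<bar>G \<omega> s\<bar>"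
  shows "bn \<Omega> T N F"
  using assms unfolding bn_def by (meson order_trans)

lemma bn_eq:
  assumes "bn \<Omega> T N G" "\<And>\<omega> s. \<omega> \<in> \<Omega> \<Longrightarrow> s \<in> {0..T \<omega>} \<Longrightarrow> F \<omega> s = G \<omega> s"
  shows "bn \<Omega> T N F"
  using assms by (intro bn_mono[OF assms(1)]) auto

lemma bn_zero: "bn \<Omega> T N (\<lambda>\<omega> s. 0)"
  unfolding bn_def by (rule exI[of _ 0]) auto

lemma bn_add:
  assumes "bn \<Omega> T N F" "bn \<Omega> T N G"
  shows "bn \<Omega> T N (\<lambda>\<omega> s. F \<omega> s + G \<omega> s)"
proof -
  obtain K1 K2 where "\<forall>\<omega>\<in>\<Omega>. \<forall>s\<in>{0..T \<omega>}. \<bar>F \<omega> s\<bar> \<le> K1 * N \<omega>"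
    "\<forall>\<omega>\<in>\<Omega>. \<forall>s\<in>{0..T \<omega>}. \<bar>G \<omega> s\<bar> \<le> K2 * N \<omega>" using assms unfolding bn_def by blast
  then have "\<forall>\<omega>\<in>\<Omega>. \<forall>s\<in>{0..T \<omega>}. \<bar>F \<omega> s + G \<omega> s\<bar> \<le> (K1 + K2) * N \<omega>"
    by (auto simp: distrib_right intro!: order_trans[OF abs_triangle_ineq] add_mono)
  then show ?thesis unfolding bn_def by blast
qed

lemma bn_cmult:
  assumes "bn \<Omega> T N F"
  shows "bn \<Omega> T N (\<lambda>\<omega> s. c * F \<omega> s)"
proof -
  obtain K where K: "\<forall>\<omega>\<in>\<Omega>. \<forall>s\<in>{0..T \<omega>}. \<bar>F \<omega> s\<bar> \<le> K * N \<omega>"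
    using assms unfolding bn_def by blast
  have "\<forall>\<omega>\<in>\<Omega>. \<forall>s\<in>{0..T \<omega>}. \<bar>c * F \<omega> s\<bar> \<le> (\<bar>c\<bar> * K) * N \<omega>"
    using K by (auto simp: abs_mult mult.assoc intro!: mult_left_mono)
  then show ?thesis unfolding bn_def by blast
qed

lemma bn_uminus: "bn \<Omega> T N F \<Longrightarrow> bn \<Omega> T N (\<lambda>\<omega> s. - F \<omega> s)"
  by (rule bn_mono) auto

lemma bn_abs: "bn \<Omega> T N F \<Longrightarrow> bn \<Omega> T N (\<lambda>\<omega> s. \<bar>F \<omega> s\<bar>)"
  by (rule bn_mono) auto

lemma bn_diff:
  assumes "bn \<Omega> T N F" "bn \<Omega> T N G"
  shows "bn \<Omega> T N (\<lambda>\<omega> s. F \<omega> s - G \<omega> s)"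
  using bn_add[OF assms(1) bn_uminus[OF assms(2)]] by simp

lemma bn_sum:
  assumes "finite A" "\<forall>a\<in>A. bn \<Omega> T N (F a)"
  shows "bn \<Omega> T N (\<lambda>\<omega> s. \<Sum>a\<in>A. F a \<omega> s)"
  using assms
proof (induction A rule: finite_induct)
  case empty then show ?case by (simp add: bn_zero)
next
  case (insert a A)
  then show ?case by (simp add: bn_add)
qed

lemma sup_facts:
  fixes h :: "'k \<Rightarrow> real \<Rightarrow> real"
  assumes "finite K" "t \<ge> 0" "\<forall>k\<in>K. \<exists>B. \<forall>s\<in>{0..t}. \<bar>h k s\<bar> \<le> B"
  shows "\<forall>s\<in>{0..t}. (\<Sum>k\<in>K. \<bar>h k s\<bar>) \<le> (SUP s\<in>{0..t}. \<Sum>k\<in>K. \<bar>h k s\<bar>)"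
    "0 \<le> (SUP s\<in>{0..t}. \<Sum>k\<in>K. \<bar>h k s\<bar>)"
proof -
  obtain B where B: "\<forall>k\<in>K. \<forall>s\<in>{0..t}. \<bar>h k s\<bar> \<le> B k" using assms(3) by metis
  have bd: "bdd_above ((\<lambda>s. \<Sum>k\<in>K. \<bar>h k s\<bar>) ` {0..t})"
    by (rule bdd_aboveI2[where M="\<Sum>k\<in>K. B k"]) (use B in \<open>auto intro: sum_mono\<close>)
  show 1: "\<forall>s\<in>{0..t}. (\<Sum>k\<in>K. \<bar>h k s\<bar>) \<le> (SUP s\<in>{0..t}. \<Sum>k\<in>K. \<bar>h k s\<bar>)"
    using cSUP_upper[OF _ bd] by blast
  have "0 \<le> (\<Sum>k\<in>K. \<bar>h k 0\<bar>)" by (simp add: sum_nonneg)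
  also have "\<dots> \<le> (SUP s\<in>{0..t}. \<Sum>k\<in>K. \<bar>h k s\<bar>)" using 1 assms(2) by auto
  finally show "0 \<le> (SUP s\<in>{0..t}. \<Sum>k\<in>K. \<bar>h k s\<bar>)" .
qed

lemma ml_sum2:
  assumes "finite K" "\<forall>k\<in>K. meas_locbdd (g k)" "meas_locbdd f" "meas_locbdd h" "s \<ge> 0"
    "\<forall>r\<in>{0..s}. f r - h r = (\<Sum>k\<in>K. g k r)"
  shows "Jint f s - Jint h s = (\<Sum>k\<in>K. Jint (g k) s)"
proof -
  have "Jint f s - Jint h s = integral {0..s} f - integral {0..s} h"
    using ml_int assms by auto
  also have "\<dots> = integral {0..s} (\<lambda>r. f r - h r)"
    by (rule integral_diff[symmetric]) (use assms ml_int in auto)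
  also have "\<dots> = integral {0..s} (\<lambda>r. \<Sum>k\<in>K. g k r)"
    using assms(6) by (auto intro: integral_cong)
  also have "\<dots> = (\<Sum>k\<in>K. integral {0..s} (g k))"
    by (rule integral_sum) (use assms ml_int in auto)
  also have "\<dots> = (\<Sum>k\<in>K. Jint (g k) s)" using assms ml_int by auto
  finally show ?thesis .
qed

lemma ml_const0: "meas_locbdd (\<lambda>r. 0)"
  unfolding meas_locbdd_def by auto



theorem proposition1:
  fixes nI nJ :: nat and E :: "(nat \<times> nat) set"
    and \<mu> :: "nat \<Rightarrow> nat \<Rightarrow> real" and \<theta> :: "nat \<Rightarrow> real"
  defines "Iset \<equiv> {1..nI}" and "Jset \<equiv> {nI+1..nI+nJ}"
  assumes E_sub: "E \<subseteq> Iset \<times> Jset"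
    and tree: "ug_tree (Iset \<union> Jset) (bip_adj E)"
    and mu_pos: "\<And>i j. (i, j) \<in> E \<Longrightarrow> \<mu> i j > 0"
    and mu_zero: "\<And>i j. (i, j) \<notin> E \<Longrightarrow> \<mu> i j = 0"
    and theta_nn: "\<And>i. i \<in> Iset \<Longrightarrow> \<theta> i \<ge> 0"
  shows "\<exists>m1::real. \<forall>(w::nat \<Rightarrow> real \<Rightarrow> real) (x::nat \<Rightarrow> real \<Rightarrow> real)
            (y::nat \<Rightarrow> real \<Rightarrow> real) (z::nat \<Rightarrow> real \<Rightarrow> real)
            (\<psi>::nat \<Rightarrow> nat \<Rightarrow> real \<Rightarrow> real).
     ((\<forall>i\<in>Iset. meas_locbdd (w i) \<and> meas_locbdd (x i) \<and> meas_locbdd (y i)) \<and>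
      (\<forall>j\<in>Jset. meas_locbdd (z j)) \<and>
      (\<forall>i\<in>Iset. \<forall>j\<in>Jset. meas_locbdd (\<psi> i j)) \<and>
      (\<forall>i\<in>Iset. \<forall>j\<in>Jset. (i, j) \<notin> E \<longrightarrow> (\<forall>s\<ge>0. \<psi> i j s = 0)) \<and>
      (\<forall>i\<in>Iset. \<forall>t\<ge>0. x i t = w i t - (\<Sum>j\<in>Jset. \<mu> i j * Jint (\<psi> i j) t)
                                  - \<theta> i * Jint (y i) t) \<and>
      (\<forall>i\<in>Iset. \<forall>t\<ge>0. (\<Sum>j\<in>Jset. \<psi> i j t) = x i t - y i t) \<and>
      (\<forall>j\<in>Jset. \<forall>t\<ge>0. (\<Sum>i\<in>Iset. \<psi> i j t) = - z j t))
     \<longrightarrow> (\<forall>t\<ge>0.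
           (\<Sum>i\<in>Iset. \<Sum>j\<in>Jset. \<bar>Jint (\<psi> i j) t\<bar>) + (\<Sum>i\<in>Iset. \<bar>x i t\<bar>)
           \<le> m1 * ((SUP s\<in>{0..t}. \<Sum>i\<in>Iset. \<bar>w i s\<bar>)
                   + (SUP s\<in>{0..t}. \<Sum>i\<in>Iset. \<bar>Jint (y i) s\<bar>)
                   + (SUP s\<in>{0..t}. \<Sum>j\<in>Jset. \<bar>Jint (z j) s\<bar>)))"
proof -
  have finI: "finite Iset" and finJ: "finite Jset" and disj: "Iset \<inter> Jset = {}"
    unfolding Iset_def Jset_def by auto
  have nocyc: "\<not> ug_has_cycle (Iset \<union> Jset) (bip_adj E)" using tree unfolding ug_tree_def by blast
  have wfR: "wf (depR E)" by (rule dep_wf[OF E_sub finI finJ disj nocyc])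
  define Hyp where "Hyp = (\<lambda>(w::nat \<Rightarrow> real \<Rightarrow> real) (x::nat \<Rightarrow> real \<Rightarrow> real)
            (y::nat \<Rightarrow> real \<Rightarrow> real) (z::nat \<Rightarrow> real \<Rightarrow> real)
            (\<psi>::nat \<Rightarrow> nat \<Rightarrow> real \<Rightarrow> real).
     ((\<forall>i\<in>Iset. meas_locbdd (w i) \<and> meas_locbdd (x i) \<and> meas_locbdd (y i)) \<and>
      (\<forall>j\<in>Jset. meas_locbdd (z j)) \<and>
      (\<forall>i\<in>Iset. \<forall>j\<in>Jset. meas_locbdd (\<psi> i j)) \<and>
      (\<forall>i\<in>Iset. \<forall>j\<in>Jset. (i, j) \<notin> E \<longrightarrow> (\<forall>s\<ge>0. \<psi> i j s = 0)) \<and>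
      (\<forall>i\<in>Iset. \<forall>t\<ge>0. x i t = w i t - (\<Sum>j\<in>Jset. \<mu> i j * Jint (\<psi> i j) t)
                                  - \<theta> i * Jint (y i) t) \<and>
      (\<forall>i\<in>Iset. \<forall>t\<ge>0. (\<Sum>j\<in>Jset. \<psi> i j t) = x i t - y i t) \<and>
      (\<forall>j\<in>Jset. \<forall>t\<ge>0. (\<Sum>i\<in>Iset. \<psi> i j t) = - z j t)))"
  define W where "W = (\<lambda>\<omega>::(nat \<Rightarrow> real \<Rightarrow> real) \<times> (nat \<Rightarrow> real \<Rightarrow> real) \<times> (nat \<Rightarrow> real \<Rightarrow> real)
     \<times> (nat \<Rightarrow> real \<Rightarrow> real) \<times> (nat \<Rightarrow> nat \<Rightarrow> real \<Rightarrow> real) \<times> real. fst \<omega>)"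
  define Xs where "Xs = (\<lambda>\<omega>::(nat \<Rightarrow> real \<Rightarrow> real) \<times> (nat \<Rightarrow> real \<Rightarrow> real) \<times> (nat \<Rightarrow> real \<Rightarrow> real)
     \<times> (nat \<Rightarrow> real \<Rightarrow> real) \<times> (nat \<Rightarrow> nat \<Rightarrow> real \<Rightarrow> real) \<times> real. fst (snd \<omega>))"
  define Ys where "Ys = (\<lambda>\<omega>::(nat \<Rightarrow> real \<Rightarrow> real) \<times> (nat \<Rightarrow> real \<Rightarrow> real) \<times> (nat \<Rightarrow> real \<Rightarrow> real)
     \<times> (nat \<Rightarrow> real \<Rightarrow> real) \<times> (nat \<Rightarrow> nat \<Rightarrow> real \<Rightarrow> real) \<times> real. fst (snd (snd \<omega>)))"
  define Zs where "Zs = (\<lambda>\<omega>::(nat \<Rightarrow> real \<Rightarrow> real) \<times> (nat \<Rightarrow> real \<Rightarrow> real) \<times> (nat \<Rightarrow> real \<Rightarrow> real)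
     \<times> (nat \<Rightarrow> real \<Rightarrow> real) \<times> (nat \<Rightarrow> nat \<Rightarrow> real \<Rightarrow> real) \<times> real. fst (snd (snd (snd \<omega>))))"
  define Ps where "Ps = (\<lambda>\<omega>::(nat \<Rightarrow> real \<Rightarrow> real) \<times> (nat \<Rightarrow> real \<Rightarrow> real) \<times> (nat \<Rightarrow> real \<Rightarrow> real)
     \<times> (nat \<Rightarrow> real \<Rightarrow> real) \<times> (nat \<Rightarrow> nat \<Rightarrow> real \<Rightarrow> real) \<times> real. fst (snd (snd (snd (snd \<omega>)))))"
  define T where "T = (\<lambda>\<omega>::(nat \<Rightarrow> real \<Rightarrow> real) \<times> (nat \<Rightarrow> real \<Rightarrow> real) \<times> (nat \<Rightarrow> real \<Rightarrow> real)
     \<times> (nat \<Rightarrow> real \<Rightarrow> real) \<times> (nat \<Rightarrow> nat \<Rightarrow> real \<Rightarrow> real) \<times> real. snd (snd (snd (snd (snd \<omega>)))))"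
  define \<Omega> where "\<Omega> = {\<omega>. Hyp (W \<omega>) (Xs \<omega>) (Ys \<omega>) (Zs \<omega>) (Ps \<omega>) \<and> T \<omega> \<ge> 0}"
  define SW where "SW = (\<lambda>\<omega>. SUP s\<in>{0..T \<omega>}. \<Sum>i\<in>Iset. \<bar>W \<omega> i s\<bar>)"
  define SY where "SY = (\<lambda>\<omega>. SUP s\<in>{0..T \<omega>}. \<Sum>i\<in>Iset. \<bar>Jint (Ys \<omega> i) s\<bar>)"
  define SZ where "SZ = (\<lambda>\<omega>. SUP s\<in>{0..T \<omega>}. \<Sum>j\<in>Jset. \<bar>Jint (Zs \<omega> j) s\<bar>)"
  define N where "N = (\<lambda>\<omega>. SW \<omega> + SY \<omega> + SZ \<omega>)"
  have H_T: "T \<omega> \<ge> 0" if "\<omega> \<in> \<Omega>" for \<omega> using that unfolding \<Omega>_def by auto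
  have H_m: "meas_locbdd (W \<omega> i) \<and> meas_locbdd (Xs \<omega> i) \<and> meas_locbdd (Ys \<omega> i)"
    if "\<omega> \<in> \<Omega>" "i \<in> Iset" for \<omega> i using that unfolding \<Omega>_def Hyp_def by auto
  have H_mz: "meas_locbdd (Zs \<omega> j)" if "\<omega> \<in> \<Omega>" "j \<in> Jset" for \<omega> j
    using that unfolding \<Omega>_def Hyp_def by auto
  have H_mp: "meas_locbdd (Ps \<omega> i j)" if "\<omega> \<in> \<Omega>" "i \<in> Iset" "j \<in> Jset" for \<omega> i j
    using that unfolding \<Omega>_def Hyp_def by auto
  have H_zero: "\<forall>s\<ge>0. Ps \<omega> i j s = 0" if "\<omega> \<in> \<Omega>" "i \<in> Iset" "j \<in> Jset" "(i, j) \<notin> E" for \<omega> i j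
    using that unfolding \<Omega>_def Hyp_def by auto
  have H_x: "Xs \<omega> i t = W \<omega> i t - (\<Sum>j\<in>Jset. \<mu> i j * Jint (Ps \<omega> i j) t) - \<theta> i * Jint (Ys \<omega> i) t"
    if "\<omega> \<in> \<Omega>" "i \<in> Iset" "t \<ge> 0" for \<omega> i t
    using that unfolding \<Omega>_def Hyp_def by auto
  have H_sx: "(\<Sum>j\<in>Jset. Ps \<omega> i j t) = Xs \<omega> i t - Ys \<omega> i t"
    if "\<omega> \<in> \<Omega>" "i \<in> Iset" "t \<ge> 0" for \<omega> i t
    using that unfolding \<Omega>_def Hyp_def by auto
  have H_sz: "(\<Sum>i\<in>Iset. Ps \<omega> i j t) = - Zs \<omega> j t"
    if "\<omega> \<in> \<Omega>" "j \<in> Jset" "t \<ge> 0" for \<omega> j t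
    using that unfolding \<Omega>_def Hyp_def by auto
  have sups: "(\<Sum>i\<in>Iset. \<bar>W \<omega> i s\<bar>) \<le> SW \<omega> \<and> (\<Sum>i\<in>Iset. \<bar>Jint (Ys \<omega> i) s\<bar>) \<le> SY \<omega> \<and>
      (\<Sum>j\<in>Jset. \<bar>Jint (Zs \<omega> j) s\<bar>) \<le> SZ \<omega> \<and> 0 \<le> SW \<omega> \<and> 0 \<le> SY \<omega> \<and> 0 \<le> SZ \<omega>"
    if w: "\<omega> \<in> \<Omega>" and s: "s \<in> {0..T \<omega>}" for \<omega> s
  proof -
    have t: "T \<omega> \<ge> 0" using H_T[OF w] .
    have bw: "\<forall>i\<in>Iset. \<exists>B. \<forall>s\<in>{0..T \<omega>}. \<bar>W \<omega> i s\<bar> \<le> B"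
      using H_m[OF w] t unfolding meas_locbdd_def by blast
    have bY: "\<forall>i\<in>Iset. \<exists>B. \<forall>s\<in>{0..T \<omega>}. \<bar>Jint (Ys \<omega> i) s\<bar> \<le> B"
      using H_m[OF w] t ml_bdd by blast
    have bz: "\<forall>j\<in>Jset. \<exists>B. \<forall>s\<in>{0..T \<omega>}. \<bar>Jint (Zs \<omega> j) s\<bar> \<le> B"
      using H_mz[OF w] t ml_bdd by blast
    note a = sup_facts[OF finI t bw] sup_facts[OF finI t bY]
      sup_facts[OF finJ t bz]
    show ?thesis using a s unfolding SW_def SY_def SZ_def by auto
  qed
  have N0: "N \<omega> \<ge> 0" if "\<omega> \<in> \<Omega>" for \<omega>
    using sups[OF that, of 0] H_T[OF that] unfolding N_def by auto
  have bnW: "bn \<Omega> T N (\<lambda>\<omega> s. W \<omega> i s)" if i: "i \<in> Iset" for i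
    unfolding bn_def
  proof (rule exI[of _ 1], intro ballI)
    fix \<omega> s assume w: "\<omega> \<in> \<Omega>" and s: "s \<in> {0..T \<omega>}"
    have "\<bar>W \<omega> i s\<bar> \<le> (\<Sum>i\<in>Iset. \<bar>W \<omega> i s\<bar>)"
      by (rule member_le_sum[OF i _ finI]) auto
    then show "\<bar>W \<omega> i s\<bar> \<le> 1 * N \<omega>" using sups[OF w s] unfolding N_def by (smt (verit))
  qed
  have bnY: "bn \<Omega> T N (\<lambda>\<omega> s. Jint (Ys \<omega> i) s)" if i: "i \<in> Iset" for i
    unfolding bn_def
  proof (rule exI[of _ 1], intro ballI)
    fix \<omega> s assume w: "\<omega> \<in> \<Omega>" and s: "s \<in> {0..T \<omega>}"
    have "\<bar>Jint (Ys \<omega> i) s\<bar> \<le> (\<Sum>i\<in>Iset. \<bar>Jint (Ys \<omega> i) s\<bar>)"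
      by (rule member_le_sum[OF i _ finI]) auto
    then show "\<bar>Jint (Ys \<omega> i) s\<bar> \<le> 1 * N \<omega>" using sups[OF w s] unfolding N_def by (smt (verit))
  qed
  have bnZ: "bn \<Omega> T N (\<lambda>\<omega> s. Jint (Zs \<omega> j) s)" if j: "j \<in> Jset" for j
    unfolding bn_def
  proof (rule exI[of _ 1], intro ballI)
    fix \<omega> s assume w: "\<omega> \<in> \<Omega>" and s: "s \<in> {0..T \<omega>}"
    have "\<bar>Jint (Zs \<omega> j) s\<bar> \<le> (\<Sum>j\<in>Jset. \<bar>Jint (Zs \<omega> j) s\<bar>)"
      by (rule member_le_sum[OF j _ finJ]) auto
    then show "\<bar>Jint (Zs \<omega> j) s\<bar> \<le> 1 * N \<omega>" using sups[OF w s] unfolding N_def by (smt (verit))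
  qed
  have EqX: "Jint (Xs \<omega> i) s - Jint (Ys \<omega> i) s = (\<Sum>j\<in>Jset. Jint (Ps \<omega> i j) s)"
    if w: "\<omega> \<in> \<Omega>" and i: "i \<in> Iset" and s: "s \<in> {0..T \<omega>}" for \<omega> i s
    by (rule ml_sum2[OF finJ]) (use H_mp[OF w i] H_m[OF w i] s H_sx[OF w i] in auto)
  have EqZ: "(\<Sum>i\<in>Iset. Jint (Ps \<omega> i j) s) = - Jint (Zs \<omega> j) s"
    if w: "\<omega> \<in> \<Omega>" and j: "j \<in> Jset" and s: "s \<in> {0..T \<omega>}" for \<omega> j s
  proof -
    have "Jint (\<lambda>r. 0) s - Jint (Zs \<omega> j) s = (\<Sum>i\<in>Iset. Jint (Ps \<omega> i j) s)"
      by (rule ml_sum2[OF finI _ ml_const0]) (use H_mp[OF w _ j] H_mz[OF w j] s H_sz[OF w j] in auto)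
    moreover have "Jint (\<lambda>r. 0) s = 0" by (rule ml_zero) (use s in auto)
    ultimately show ?thesis by simp
  qed
  have bnP0: "bn \<Omega> T N (\<lambda>\<omega> s. Jint (Ps \<omega> i j) s)"
    if "i \<in> Iset" "j \<in> Jset" "(i, j) \<notin> E" for i j
    by (rule bn_eq[OF bn_zero]) (use H_zero that in \<open>auto intro!: ml_zero\<close>)
  have bnE: "e \<in> E \<longrightarrow> bn \<Omega> T N (\<lambda>\<omega> s. Jint (Ps \<omega> (fst e) (snd e)) s)" for e
  proof (rule wf_induct[OF wfR, where P="\<lambda>e. e \<in> E \<longrightarrow> bn \<Omega> T N (\<lambda>\<omega> s. Jint (Ps \<omega> (fst e) (snd e)) s)"])
    fix e :: "nat \<times> nat"
    assume IH: "\<forall>e2. (e2, e) \<in> depR E \<longrightarrow> e2 \<in> E \<longrightarrow> bn \<Omega> T N (\<lambda>\<omega> s. Jint (Ps \<omega> (fst e2) (snd e2)) s)"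
    show "e \<in> E \<longrightarrow> bn \<Omega> T N (\<lambda>\<omega> s. Jint (Ps \<omega> (fst e) (snd e)) s)"
    proof
      assume eE: "e \<in> E"
      obtain i j where e: "e = (i, j)" by (cases e)
      have ij: "(i, j) \<in> E" using eE e by simp
      have i: "i \<in> Iset" and j: "j \<in> Jset" using ij E_sub by auto
      have mu: "\<mu> i j > 0" using mu_pos[OF ij] .
      have bnA: "bn \<Omega> T N (\<lambda>\<omega> s. Jint (Ps \<omega> i j2) s)" if j2: "j2 \<in> Jset - {j}" for j2
      proof (cases "(i, j2) \<in> E")
        case False then show ?thesis using bnP0 i j2 by auto
      next
        case True
        have b1: "bn \<Omega> T N (\<lambda>\<omega> s. Jint (Ps \<omega> i2 j2) s)" if i2: "i2 \<in> Iset - {i}" for i2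
        proof (cases "(i2, j2) \<in> E")
          case False then show ?thesis using bnP0 i2 j2 by auto
        next
          case True2: True
          have "((i2, j2), e) \<in> depR E" unfolding depR_def e using True True2 ij i2 j2 by auto
          then show ?thesis using IH True2 by fastforce
        qed
        have b2: "bn \<Omega> T N (\<lambda>\<omega> s. - Jint (Zs \<omega> j2) s - (\<Sum>i2\<in>Iset - {i}. Jint (Ps \<omega> i2 j2) s))"
          by (intro bn_diff bn_uminus bn_sum bnZ) (use j2 finI b1 in auto)
        show ?thesis
        proof (rule bn_eq[OF b2])
          fix \<omega> s assume w: "\<omega> \<in> \<Omega>" and s: "s \<in> {0..T \<omega>}"
          have "(\<Sum>i2\<in>Iset. Jint (Ps \<omega> i2 j2) s) = Jint (Ps \<omega> i j2) s + (\<Sum>i2\<in>Iset - {i}. Jint (Ps \<omega> i2 j2) s)"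
            by (rule sum.remove[OF finI i])
          then show "Jint (Ps \<omega> i j2) s = - Jint (Zs \<omega> j2) s - (\<Sum>i2\<in>Iset - {i}. Jint (Ps \<omega> i2 j2) s)"
            using EqZ[OF w _ s, of j2] j2 by simp
        qed
      qed
      define G where "G = (\<lambda>\<omega> s. \<Sum>j2\<in>Jset - {j}. Jint (Ps \<omega> i j2) s)"
      have bnG: "bn \<Omega> T N G" unfolding G_def by (rule bn_sum) (use finJ bnA in auto)
      have bnA': "\<forall>j2\<in>Jset - {j}. bn \<Omega> T N (\<lambda>\<omega> s. \<mu> i j2 * Jint (Ps \<omega> i j2) s)"
      proof
        fix j2 assume "j2 \<in> Jset - {j}"
        then show "bn \<Omega> T N (\<lambda>\<omega> s. \<mu> i j2 * Jint (Ps \<omega> i j2) s)" by (rule bn_cmult[OF bnA])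
      qed
      define g where "g = (\<lambda>\<omega> s. W \<omega> i s + \<mu> i j * (Jint (Ys \<omega> i) s + G \<omega> s)
          - (\<Sum>j2\<in>Jset - {j}. \<mu> i j2 * Jint (Ps \<omega> i j2) s) - \<theta> i * Jint (Ys \<omega> i) s)"
      have bng: "bn \<Omega> T N g" unfolding g_def
        using bnA' by (intro bn_diff bn_add bn_cmult bnW bnY bnG bn_sum) (use i finJ in auto)
      have PX: "Jint (Ps \<omega> i j) s = Jint (Xs \<omega> i) s - Jint (Ys \<omega> i) s - G \<omega> s"
        if w: "\<omega> \<in> \<Omega>" and s: "s \<in> {0..T \<omega>}" for \<omega> s
      proof -
        have "(\<Sum>j2\<in>Jset. Jint (Ps \<omega> i j2) s) = Jint (Ps \<omega> i j) s + G \<omega> s"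
          unfolding G_def by (rule sum.remove[OF finJ j])
        then show ?thesis using EqX[OF w i s] by simp
      qed
      obtain Kg where Kg: "\<forall>\<omega>\<in>\<Omega>. \<forall>s\<in>{0..T \<omega>}. \<bar>g \<omega> s\<bar> \<le> Kg * N \<omega>"
        using bng unfolding bn_def by blast
      have bnX: "bn \<Omega> T N (\<lambda>\<omega> s. Jint (Xs \<omega> i) s)" unfolding bn_def
      proof (rule exI[of _ "Kg / \<mu> i j"], intro ballI)
        fix \<omega> s assume w: "\<omega> \<in> \<Omega>" and s: "s \<in> {0..T \<omega>}"
        have eq: "\<forall>r\<in>{0..T \<omega>}. Xs \<omega> i r = g \<omega> r - \<mu> i j * Jint (Xs \<omega> i) r"
        proof
          fix r assume r: "r \<in> {0..T \<omega>}"
          have "(\<Sum>j2\<in>Jset. \<mu> i j2 * Jint (Ps \<omega> i j2) r) = \<mu> i j * Jint (Ps \<omega> i j) r + (\<Sum>j2\<in>Jset - {j}. \<mu> i j2 * Jint (Ps \<omega> i j2) r)"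
            by (rule sum.remove[OF finJ j])
          then show "Xs \<omega> i r = g \<omega> r - \<mu> i j * Jint (Xs \<omega> i) r"
            using H_x[OF w i, of r] PX[OF w r] r unfolding g_def by (simp add: algebra_simps)
        qed
        have "\<bar>Jint (Xs \<omega> i) s\<bar> \<le> Kg * N \<omega> / \<mu> i j"
          by (rule cmp_abs[OF _ mu H_T[OF w] eq _ s]) (use H_m[OF w i] Kg w in auto)
        then show "\<bar>Jint (Xs \<omega> i) s\<bar> \<le> Kg / \<mu> i j * N \<omega>" by simp
      qed
      have "bn \<Omega> T N (\<lambda>\<omega> s. Jint (Xs \<omega> i) s - Jint (Ys \<omega> i) s - G \<omega> s)"
        by (intro bn_diff bnX bnY[OF i] bnG)
      then have "bn \<Omega> T N (\<lambda>\<omega> s. Jint (Ps \<omega> i j) s)"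
        by (rule bn_eq) (use PX in auto)
      then show "bn \<Omega> T N (\<lambda>\<omega> s. Jint (Ps \<omega> (fst e) (snd e)) s)" using e by simp
    qed
  qed
  have bnP: "bn \<Omega> T N (\<lambda>\<omega> s. Jint (Ps \<omega> i j) s)" if "i \<in> Iset" "j \<in> Jset" for i j
  proof (cases "(i, j) \<in> E")
    case True then show ?thesis using bnE by fastforce
  next
    case False then show ?thesis using bnP0 that by auto
  qed
  have bnP': "\<forall>j\<in>Jset. bn \<Omega> T N (\<lambda>\<omega> s. \<mu> i j * Jint (Ps \<omega> i j) s)" if "i \<in> Iset" for i
  proof
    fix j assume "j \<in> Jset"
    then show "bn \<Omega> T N (\<lambda>\<omega> s. \<mu> i j * Jint (Ps \<omega> i j) s)" by (rule bn_cmult[OF bnP[OF that]])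
  qed
  have bnx: "bn \<Omega> T N (\<lambda>\<omega> s. Xs \<omega> i s)" if i: "i \<in> Iset" for i
  proof -
    have "bn \<Omega> T N (\<lambda>\<omega> s. W \<omega> i s - (\<Sum>j\<in>Jset. \<mu> i j * Jint (Ps \<omega> i j) s) - \<theta> i * Jint (Ys \<omega> i) s)"
      using bnP' by (intro bn_diff bn_cmult bnW bnY bn_sum) (use i finJ in auto)
    then show ?thesis by (rule bn_eq) (use H_x i in auto)
  qed
  have bnF: "bn \<Omega> T N (\<lambda>\<omega> s. (\<Sum>i\<in>Iset. \<Sum>j\<in>Jset. \<bar>Jint (Ps \<omega> i j) s\<bar>) + (\<Sum>i\<in>Iset. \<bar>Xs \<omega> i s\<bar>))"
    by (intro bn_add bn_sum bn_abs ballI bnP bnx) (use finI finJ in auto)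
  then obtain K where K: "\<forall>\<omega>\<in>\<Omega>. \<forall>s\<in>{0..T \<omega>}. \<bar>(\<Sum>i\<in>Iset. \<Sum>j\<in>Jset. \<bar>Jint (Ps \<omega> i j) s\<bar>) + (\<Sum>i\<in>Iset. \<bar>Xs \<omega> i s\<bar>)\<bar> \<le> K * N \<omega>"
    unfolding bn_def by blast
  show ?thesis
  proof (rule exI[of _ K], intro allI impI)
    fix w x y z \<psi> and t :: real
    assume h: "(\<forall>i\<in>Iset. meas_locbdd (w i) \<and> meas_locbdd (x i) \<and> meas_locbdd (y i)) \<and>
      (\<forall>j\<in>Jset. meas_locbdd (z j)) \<and>
      (\<forall>i\<in>Iset. \<forall>j\<in>Jset. meas_locbdd (\<psi> i j)) \<and>
      (\<forall>i\<in>Iset. \<forall>j\<in>Jset. (i, j) \<notin> E \<longrightarrow> (\<forall>s\<ge>0. \<psi> i j s = 0)) \<and>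
      (\<forall>i\<in>Iset. \<forall>t\<ge>0. x i t = w i t - (\<Sum>j\<in>Jset. \<mu> i j * Jint (\<psi> i j) t)
                                  - \<theta> i * Jint (y i) t) \<and>
      (\<forall>i\<in>Iset. \<forall>t\<ge>0. (\<Sum>j\<in>Jset. \<psi> i j t) = x i t - y i t) \<and>
      (\<forall>j\<in>Jset. \<forall>t\<ge>0. (\<Sum>i\<in>Iset. \<psi> i j t) = - z j t)"
      and t: "t \<ge> 0"
    define \<omega> where "\<omega> = (w, x, y, z, \<psi>, t)"
    have w: "\<omega> \<in> \<Omega>" unfolding \<omega>_def \<Omega>_def Hyp_def W_def Xs_def Ys_def Zs_def Ps_def T_def
      using h t by simp
    have "\<bar>(\<Sum>i\<in>Iset. \<Sum>j\<in>Jset. \<bar>Jint (Ps \<omega> i j) t\<bar>) + (\<Sum>i\<in>Iset. \<bar>Xs \<omega> i t\<bar>)\<bar> \<le> K * N \<omega>"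
      using K w t unfolding \<omega>_def T_def by auto
    then show "(\<Sum>i\<in>Iset. \<Sum>j\<in>Jset. \<bar>Jint (\<psi> i j) t\<bar>) + (\<Sum>i\<in>Iset. \<bar>x i t\<bar>)
           \<le> K * ((SUP s\<in>{0..t}. \<Sum>i\<in>Iset. \<bar>w i s\<bar>)
                   + (SUP s\<in>{0..t}. \<Sum>i\<in>Iset. \<bar>Jint (y i) s\<bar>)
                   + (SUP s\<in>{0..t}. \<Sum>j\<in>Jset. \<bar>Jint (z j) s\<bar>))"
      unfolding \<omega>_def N_def SW_def SY_def SZ_def W_def Xs_def Ys_def Zs_def Ps_def T_def by simp
  qed
qed

end
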